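(* Let $n\ge1$ and $\mathcal{K}=\{\texttt{a},\texttt{b}\}$. For the uniform prior $\pi$ on $\mathcal{K}^n$ and the single-target gain function $g_{\rm T}$, $$V_{\rm T}[\pi\triangleright\mathbf{S}]=\frac12+\frac{1}{2^n}\binom{n-1}{\lfloor\frac{n-1}{2}\rfloor}.$$
   Context: A dataset is $x=(x_0,\dots,x_{n-1})\in\mathcal{K}^n$; its histogram $h(x)$ is the map $\kappa\mapsto|\{i:x_i=\kappa\}|$; $\#z$ is the number of datasets with histogram $z$. Shuffle channel $\mathbf{S}:\mathcal{K}^n\to\mathcal{K}^n$: $\mathbf{S}_{x,y}=1/\#h(x)$ if $h(y)=h(x)$, else $0$. Uniform prior: $\pi_x=1/2^n$. Single-target gain function: $\mathcal{W}=\mathcal{K}$, $g_{\rm T}(w,x)=1$ if $x_0=w$, else $0$. Posterior vulnerability: $V_{\rm T}[\pi\triangleright\mathbf{C}]=\sum_{y}\max_{w\in\mathcal{W}}\sum_{x}\pi_x\mathbf{C}_{x,y}g_{\rm T}(w,x)$. *)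

theory Defs
  imports Complex_Main
begin

datatype K = Ka | Kb

definition datasets :: "nat \<Rightarrow> K list set" where
  "datasets n = {xs. length xs = n}"

definition hist :: "K list \<Rightarrow> K \<Rightarrow> nat" where
  "hist x = (\<lambda>k. card {i. i < length x \<and> x ! i = k})"

definition num_hist :: "nat \<Rightarrow> (K \<Rightarrow> nat) \<Rightarrow> nat" where
  "num_hist n z = card {y \<in> datasets n. hist y = z}"

definition shuffle :: "nat \<Rightarrow> K list \<Rightarrow> K list \<Rightarrow> real" where
  "shuffle n x y = (if hist y = hist x then 1 / real (num_hist n (hist x)) else 0)"

definition prior :: "nat \<Rightarrow> K list \<Rightarrow> real" where
  "prior n x = 1 / 2 ^ n"

definition g_T :: "K \<Rightarrow> K list \<Rightarrow> real" where
  "g_T w x = (if x ! 0 = w then 1 else 0)"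

definition V_T :: "nat \<Rightarrow> (K list \<Rightarrow> real) \<Rightarrow> (K list \<Rightarrow> K list \<Rightarrow> real) \<Rightarrow> real" where
  "V_T n \<pi> C = (\<Sum>y\<in>datasets n. Max ((\<lambda>w. \<Sum>x\<in>datasets n. \<pi> x * C x y * g_T w x) ` UNIV))"

end

theory Submission
  imports Defs
begin

lemma comb_sum:
  fixes m :: nat
  shows "(\<Sum>k\<le>Suc m. max (if k = 0 then 0 else m choose (k - 1)) (m choose k))
         = 2 ^ m + (m choose (m div 2))"
proof -
  define h where "h = Suc m div 2"
  have hm: "h \<le> m" unfolding h_def by simp
  let ?f = "\<lambda>k. max (if k = 0 then 0 else m choose (k - 1)) (m choose k)"
  have s1: "\<And>k. k \<le> h \<Longrightarrow> ?f k = m choose k"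
  proof -
    fix k assume k: "k \<le> h"
    show "?f k = m choose k"
    proof (cases "k = 0")
      case False
      have "m choose (k - 1) \<le> m choose k"
      proof (cases "2 * k \<le> m")
        case True thus ?thesis by (intro binomial_mono) auto
      next
        case F2: False
        with k have "m - (k - 1) = k" using False unfolding h_def by auto
        thus ?thesis using binomial_symmetric[of "k - 1" m] F2 by auto
      qed
      thus ?thesis using False by auto
    qed simp
  qed
  have s2: "\<And>k. h < k \<Longrightarrow> k \<le> Suc m \<Longrightarrow> ?f k = m choose (k - 1)"
  proof -
    fix k assume k: "h < k" "k \<le> Suc m"
    have "m choose k \<le> m choose (k - 1)"
    proof (cases "k = Suc m")
      case False
      thus ?thesis using k by (intro binomial_antimono) (auto simp: h_def)
    qed (simp add: binomial_eq_0)
    thus "?f k = m choose (k - 1)" using k by auto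
  qed
  have split: "{..Suc m} = {..h} \<union> {Suc h..Suc m}" using hm by auto
  have "(\<Sum>k\<le>Suc m. ?f k) = (\<Sum>k\<le>h. ?f k) + (\<Sum>k=Suc h..Suc m. ?f k)"
    unfolding split by (subst sum.union_disjoint) auto
  also have "(\<Sum>k\<le>h. ?f k) = (\<Sum>k\<le>h. m choose k)" using s1 by simp
  also have "(\<Sum>k=Suc h..Suc m. ?f k) = (\<Sum>k=Suc h..Suc m. m choose (k - 1))"
    using s2 by simp
  also have "\<dots> = (\<Sum>k=h..m. m choose k)"
    by (subst sum.shift_bounds_cl_Suc_ivl) simp
  also have "(\<Sum>k\<le>h. m choose k) = (\<Sum>k<h. m choose k) + (m choose h)"
    by (simp add: lessThan_Suc_atMost[symmetric])
  also have "(\<Sum>k=h..m. m choose k) = (\<Sum>k=h..<Suc m. m choose k)"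
    by (simp add: atLeastLessThanSuc_atLeastAtMost)
  finally have "(\<Sum>k\<le>Suc m. ?f k) = ((\<Sum>k=0..<h. m choose k) + (\<Sum>k=h..<Suc m. m choose k)) + (m choose h)"
    by (simp add: atLeast0LessThan)
  also have "(\<Sum>k=0..<h. m choose k) + (\<Sum>k=h..<Suc m. m choose k) = (\<Sum>k=0..<Suc m. m choose k)"
    using hm by (subst sum.atLeastLessThan_concat) auto
  also have "\<dots> = 2 ^ m" using choose_row_sum[of m]
    by (simp add: atLeast0LessThan lessThan_Suc_atMost)
  also have "m choose h = m choose (m div 2)"
  proof -
    have "m - h = m div 2" unfolding h_def by presburger
    thus ?thesis using binomial_symmetric[of h m] hm by simp
  qed
  finally show ?thesis .
qed


definition cA :: "K list \<Rightarrow> nat" where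
  "cA x = length (filter (\<lambda>z. z = Ka) x)"

lemma hist_Ka: "hist x Ka = cA x"
  unfolding hist_def cA_def by (simp add: length_filter_conv_card)

lemma hist_Kb: "hist x Kb = length x - cA x"
proof -
  have "hist x Kb = length (filter (\<lambda>z. \<not> z = Ka) x)"
    unfolding hist_def
    by (simp add: length_filter_conv_card) (metis K.exhaust K.distinct(1))
  thus ?thesis using sum_length_filter_compl[of "\<lambda>z. z = Ka" x] unfolding cA_def by simp
qed

lemma hist_eq: "length x = length y \<Longrightarrow> (hist x = hist y) = (cA x = cA y)"
proof
  assume "hist x = hist y" thus "cA x = cA y" by (metis hist_Ka)
next
  assume "length x = length y" "cA x = cA y"
  thus "hist x = hist y"
    by (intro ext) (metis K.exhaust hist_Ka hist_Kb)
qed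

lemma K_neq_Ka[simp]: "(y \<noteq> Ka) = (y = Kb)"
  by (cases y) auto

lemma UNIV_K: "(UNIV :: K set) = {Ka, Kb}"
  using K.exhaust by auto

lemma fin_len: "finite {x :: K list. length x = n}"
proof -
  have "{x :: K list. length x = n} = {xs. set xs \<subseteq> {Ka, Kb} \<and> length xs = n}"
    using UNIV_K by auto
  thus ?thesis using finite_lists_length_eq[of "{Ka, Kb}" n] by simp
qed

lemma cA_le: "cA x \<le> length x"
  unfolding cA_def by simp

lemma card_A: "card {x. length x = n \<and> cA x = k} = n choose k"
proof (induction n arbitrary: k)
  case 0
  have "{x :: K list. length x = 0 \<and> cA x = k} = (if k = 0 then {[]} else {})"
    by (auto simp: cA_def)
  thus ?case by simp
next
  case (Suc n)
  show ?case
  proof (cases k)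
    case 0
    have "{x. length x = Suc n \<and> cA x = k} = Cons Kb ` {x. length x = n \<and> cA x = 0}"
      using 0 by (auto simp: cA_def length_Suc_conv split: if_splits)
    thus ?thesis using Suc.IH[of 0] 0 by (simp add: card_image)
  next
    case (Suc j)
    have "{x. length x = Suc n \<and> cA x = k} =
      Cons Ka ` {x. length x = n \<and> cA x = j} \<union> Cons Kb ` {x. length x = n \<and> cA x = k}"
      using Suc by (auto simp: cA_def length_Suc_conv split: if_splits)
    moreover have "card (Cons Ka ` {x. length x = n \<and> cA x = j} \<union> Cons Kb ` {x. length x = n \<and> cA x = k})
      = card (Cons Ka ` {x. length x = n \<and> cA x = j}) + card (Cons Kb ` {x. length x = n \<and> cA x = k})"
      by (rule card_Un_disjoint) (auto intro: finite_subset[OF _ fin_len])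
    ultimately show ?thesis using Suc.IH[of j] Suc.IH[of k] Suc by (simp add: card_image)
  qed
qed

lemma card_A0a: "card {x. length x = Suc m \<and> cA x = k \<and> x ! 0 = Ka} = (if k = 0 then 0 else m choose (k - 1))"
proof (cases k)
  case 0
  have "{x. length x = Suc m \<and> cA x = k \<and> x ! 0 = Ka} = {}"
    using 0 by (auto simp: cA_def length_Suc_conv split: if_splits)
  thus ?thesis using 0 by (metis card.empty)
next
  case (Suc j)
  have "{x. length x = Suc m \<and> cA x = k \<and> x ! 0 = Ka} = Cons Ka ` {x. length x = m \<and> cA x = j}"
    using Suc by (auto simp: cA_def length_Suc_conv split: if_splits)
  thus ?thesis using card_A[of m j] Suc by (simp add: card_image)
qed

lemma card_A0b: "card {x. length x = Suc m \<and> cA x = k \<and> x ! 0 = Kb} = m choose k"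
proof -
  have "{x. length x = Suc m \<and> cA x = k \<and> x ! 0 = Kb} = Cons Kb ` {x. length x = m \<and> cA x = k}"
    by (auto simp: cA_def length_Suc_conv split: if_splits)
  thus ?thesis using card_A[of m k] by (simp add: card_image)
qed


lemma num_hist_eq: "length x = n \<Longrightarrow> num_hist n (hist x) = n choose cA x"
proof -
  assume l: "length x = n"
  have "{y \<in> datasets n. hist y = hist x} = {y. length y = n \<and> cA y = cA x}"
    using hist_eq l unfolding datasets_def by auto
  thus ?thesis unfolding num_hist_def using card_A by simp
qed

lemma inner:
  assumes l: "length y = n"
  shows "(\<Sum>x\<in>datasets n. prior n x * shuffle n x y * g_T w x)
     = real (card {x. length x = n \<and> cA x = cA y \<and> x ! 0 = w}) / (2 ^ n * real (n choose cA y))"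
proof -
  let ?c = "1 / (2 ^ n * real (n choose cA y)) :: real"
  have "(\<Sum>x\<in>datasets n. prior n x * shuffle n x y * g_T w x)
      = (\<Sum>x\<in>datasets n. if cA x = cA y \<and> x ! 0 = w then ?c else 0)"
  proof (rule sum.cong)
    fix x assume "x \<in> datasets n"
    hence lx: "length x = n" unfolding datasets_def by simp
    have "(hist y = hist x) = (cA x = cA y)" using hist_eq[of y x] l lx by auto
    thus "prior n x * shuffle n x y * g_T w x = (if cA x = cA y \<and> x ! 0 = w then ?c else 0)"
      unfolding prior_def shuffle_def g_T_def using num_hist_eq[OF lx] by auto
  qed simp
  also have "\<dots> = (\<Sum>x\<in>{x \<in> datasets n. cA x = cA y \<and> x ! 0 = w}. ?c)"
    using fin_len by (subst sum.inter_filter) (auto simp: datasets_def)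
  also have "{x \<in> datasets n. cA x = cA y \<and> x ! 0 = w} = {x. length x = n \<and> cA x = cA y \<and> x ! 0 = w}"
    unfolding datasets_def by auto
  finally show ?thesis by simp
qed

theorem mainTheorem10:
  fixes n :: nat
  assumes "n \<ge> 1"
  shows "V_T n (prior n) (shuffle n) =
           1 / 2 + 1 / 2 ^ n * real ((n - 1) choose ((n - 1) div 2))"
proof -
  obtain m where n: "n = Suc m" using assms by (cases n) auto
  define F where "F k = real (max (if k = 0 then 0 else m choose (k - 1)) (m choose k))
     / (2 ^ n * real (n choose k))" for k
  have trm: "Max ((\<lambda>w. \<Sum>x\<in>datasets n. prior n x * shuffle n x y * g_T w x) ` UNIV) = F (cA y)"
    if y: "y \<in> datasets n" for y
  proof -
    have l: "length y = n" using y unfolding datasets_def by simp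
    show ?thesis unfolding UNIV_K using inner[OF l] card_A0a[of m] card_A0b[of m]
      by (simp add: F_def n max_divide_distrib_right of_nat_max)
  qed
  have "V_T n (prior n) (shuffle n) = (\<Sum>y\<in>datasets n. F (cA y))"
    unfolding V_T_def using trm by simp
  also have "\<dots> = (\<Sum>k\<in>{..n}. \<Sum>y\<in>{y \<in> datasets n. cA y = k}. F (cA y))"
    by (rule sum.group[symmetric]) (use fin_len cA_le in \<open>auto simp: datasets_def\<close>)
  also have "\<dots> = (\<Sum>k\<in>{..n}. real (n choose k) * F k)"
  proof (rule sum.cong)
    fix k assume "k \<in> {..n}"
    have "{y \<in> datasets n. cA y = k} = {y. length y = n \<and> cA y = k}" unfolding datasets_def by auto
    thus "(\<Sum>y\<in>{y \<in> datasets n. cA y = k}. F (cA y)) = real (n choose k) * F k"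
      using card_A[of n k] by simp
  qed simp
  also have "\<dots> = (\<Sum>k\<in>{..n}. real (max (if k = 0 then 0 else m choose (k - 1)) (m choose k)) / 2 ^ n)"
  proof (rule sum.cong)
    fix k assume "k \<in> {..n}"
    hence "real (n choose k) \<noteq> 0" by simp
    thus "real (n choose k) * F k = real (max (if k = 0 then 0 else m choose (k - 1)) (m choose k)) / 2 ^ n"
      unfolding F_def by (simp add: field_simps)
  qed simp
  also have "\<dots> = real (\<Sum>k\<le>Suc m. max (if k = 0 then 0 else m choose (k - 1)) (m choose k)) / 2 ^ n"
    by (simp only: n of_nat_sum sum_divide_distrib)
  also have "\<dots> = (2 ^ m + real (m choose (m div 2))) / 2 ^ Suc m"
    unfolding comb_sum by (simp add: n)
  also have "\<dots> = 1 / 2 + 1 / 2 ^ n * real ((n - 1) choose ((n - 1) div 2))"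
    by (simp add: n field_simps)
  finally show ?thesis .
qed

end
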